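(* The relation $t\subseteq\mathbb{N}\times\mathbb{T}$ defined below is the graph of a function $t:\mathbb{N}\to\mathbb{T}$, and this function satisfies $t(n(X))=X$ for all $X\in\mathbb{T}$ and $n(t(x))=x$ for all $x\in\mathbb{N}$.
   Context: Let $\mathbb{T}$ be the set of finite terms defined inductively by: the constant $e\in\mathbb{T}$; and if $X\in\mathbb{T}$ and $Xs$ is a finite (possibly empty) list of elements of $\mathbb{T}$, then $v(X,Xs)\in\mathbb{T}$ and $w(X,Xs)\in\mathbb{T}$. Write $[\,]$ for the empty list and $[Y|Xs]$ for the list with first element $Y$ followed by the list $Xs$ (so $[e,Y|Ys]$ is the list starting with $e$, then $Y$, then $Ys$). Define $n:\mathbb{T}\to\mathbb{N}$ by $n(e)=0$, $n(v(X,[\,]))=2^{n(X)+1}-1$, $n(v(X,[Y|Xs]))=(n(w(Y,Xs))+1)2^{n(X)+1}-1$, $n(w(X,[\,]))=2^{n(X)+2}-2$, $n(w(X,[Y|Xs]))=(n(v(Y,Xs))+2)2^{n(X)+1}-2$. Let $\sigma\subseteq\mathbb{T}\times\mathbb{T}$ be the smallest relation such that (for all terms and lists of the appropriate kinds): (1) $\sigma(e,v(e,[\,]))$; (2) $\sigma(v(e,[\,]),w(e,[\,]))$; (3) if $\sigma(X,X')$ then $\sigma(v(e,[X|Xs]),w(X',Xs))$; (4) if $\sigma(P,T)$ then $\sigma(v(T,Xs),w(e,[P|Xs]))$; (5) if $\sigma(T,T')$ then $\sigma(w(T,[\,]),v(T',[\,]))$; (6) $\sigma(w(Z,[e]),v(Z,[e]))$;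 (7) if $\sigma(Y,Y')$ then $\sigma(w(Z,[e,Y|Ys]),v(Z,[Y'|Ys]))$; (8) if $\sigma(X',X)$ then $\sigma(w(Z,[X|Xs]),v(Z,[e,X'|Xs]))$. Let $O\subseteq\mathbb{T}\times\mathbb{T}$ consist of the pairs $(e,v(e,[\,]))$, $(w(X,Xs),v(e,[X|Xs]))$, and $(v(X,Xs),v(X',Xs))$ whenever $\sigma(X,X')$. Let $I\subseteq\mathbb{T}\times\mathbb{T}$ consist of the pairs $(e,w(e,[\,]))$, $(v(X,Xs),w(e,[X|Xs]))$, and $(w(X,Xs),w(X',Xs))$ whenever $\sigma(X,X')$. Let $t\subseteq\mathbb{N}\times\mathbb{T}$ be the smallest relation such that: $(0,e)\in t$; if $x>0$ is odd, $((x-1)/2,A)\in t$ and $(A,R)\in O$, then $(x,R)\in t$; if $x>0$ is even, $(x/2-1,A)\in t$ and $(A,R)\in I$, then $(x,R)\in t$. *)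

theory Defs
  imports Main
begin

datatype T = e | v T "T list" | w T "T list"

fun n :: "T \<Rightarrow> nat" where
  "n e = 0"
| "n (v X []) = 2 ^ (n X + 1) - 1"
| "n (v X (Y # Xs)) = (n (w Y Xs) + 1) * 2 ^ (n X + 1) - 1"
| "n (w X []) = 2 ^ (n X + 2) - 2"
| "n (w X (Y # Xs)) = (n (v Y Xs) + 2) * 2 ^ (n X + 1) - 2"

inductive \<sigma> :: "T \<Rightarrow> T \<Rightarrow> bool" where
  s1: "\<sigma> e (v e [])"
| s2: "\<sigma> (v e []) (w e [])"
| s3: "\<sigma> X X' \<Longrightarrow> \<sigma> (v e (X # Xs)) (w X' Xs)"
| s4: "\<sigma> P T \<Longrightarrow> \<sigma> (v T Xs) (w e (P # Xs))"
| s5: "\<sigma> T T' \<Longrightarrow> \<sigma> (w T []) (v T' [])"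
| s6: "\<sigma> (w Z [e]) (v Z [e])"
| s7: "\<sigma> Y Y' \<Longrightarrow> \<sigma> (w Z (e # Y # Ys)) (v Z (Y' # Ys))"
| s8: "\<sigma> X' X \<Longrightarrow> \<sigma> (w Z (X # Xs)) (v Z (e # X' # Xs))"

inductive O_rel :: "T \<Rightarrow> T \<Rightarrow> bool" where
  "O_rel e (v e [])"
| "O_rel (w X Xs) (v e (X # Xs))"
| "\<sigma> X X' \<Longrightarrow> O_rel (v X Xs) (v X' Xs)"

inductive I_rel :: "T \<Rightarrow> T \<Rightarrow> bool" where
  "I_rel e (w e [])"
| "I_rel (v X Xs) (w e (X # Xs))"
| "\<sigma> X X' \<Longrightarrow> I_rel (w X Xs) (w X' Xs)"

inductive t :: "nat \<Rightarrow> T \<Rightarrow> bool" where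
  t0: "t 0 e"
| t_odd: "\<lbrakk>x > 0; odd x; t ((x - 1) div 2) A; O_rel A R\<rbrakk> \<Longrightarrow> t x R"
| t_even: "\<lbrakk>x > 0; even x; t (x div 2 - 1) A; I_rel A R\<rbrakk> \<Longrightarrow> t x R"

end

theory Submission
  imports Defs
begin

lemma nv0: "n (v X []) + 1 = 2 ^ (n X + 1)"
proof -
  have ge: "(1::nat) \<le> 2 ^ (n X + 1)" by simp
  show ?thesis unfolding n.simps by (rule le_add_diff_inverse2[OF ge])
qed

lemma nv1: "n (v X (Y # Xs)) + 1 = (n (w Y Xs) + 1) * 2 ^ (n X + 1)"
proof -
  have ge: "1 * 1 \<le> (n (w Y Xs) + 1) * (2::nat) ^ (n X + 1)" by (intro mult_mono) auto
  show ?thesis unfolding n.simps by (rule le_add_diff_inverse2) (use ge in simp)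
qed

lemma nw0: "n (w X []) + 2 = 2 ^ (n X + 2)"
proof -
  have ge: "(2::nat) ^ 1 \<le> 2 ^ (n X + 2)" by (rule power_increasing) auto
  show ?thesis unfolding n.simps by (rule le_add_diff_inverse2) (use ge in simp)
qed

lemma nw1: "n (w X (Y # Xs)) + 2 = (n (v Y Xs) + 2) * 2 ^ (n X + 1)"
proof -
  have "(2::nat) ^ (n X + 1) \<ge> 1" by simp
  hence ge: "2 * 1 \<le> (n (v Y Xs) + 2) * 2 ^ (n X + 1)"
    by (intro mult_mono) auto
  show ?thesis unfolding n.simps by (rule le_add_diff_inverse2) (use ge in simp)
qed

lemma nve[simp]: "n (v e []) = 1" by simp
lemma nwe[simp]: "n (w e []) = 2" by simp

declare n.simps(2-5)[simp del]

lemma sigma_n: "\<sigma> X X' \<Longrightarrow> n X' = Suc (n X)"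
proof (induction rule: \<sigma>.induct)
  case s1 then show ?case by simp
next
  case s2 then show ?case by simp
next
  case (s3 X X' Xs)
  show ?case
  proof (cases Xs)
    case Nil
    have a: "n (v e (X # Xs)) + 1 = (n (w X Xs) + 1) * 2" using nv1[of e X Xs] by simp
    have b: "n (w X Xs) + 2 = 2 ^ (n X + 2)" using nw0[of X] Nil by simp
    have c: "n (w X' Xs) + 2 = 2 ^ (n X + 3)" using nw0[of X'] Nil s3.IH by (simp add: power_add)
    show ?thesis using a b c by (simp add: power_add)
  next
    case (Cons Y Ys)
    have a: "n (v e (X # Xs)) + 1 = (n (w X Xs) + 1) * 2" using nv1[of e X Xs] by simp
    have b: "n (w X Xs) + 2 = (n (v Y Ys) + 2) * 2 ^ (n X + 1)" using nw1[of X Y Ys] Cons by simp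
    have c: "n (w X' Xs) + 2 = (n (v Y Ys) + 2) * 2 ^ (n X + 1) * 2" using nw1[of X' Y Ys] Cons s3.IH by simp
    show ?thesis using a b c by simp
  qed
next
  case (s4 P T Xs)
  show ?case
  proof (cases Xs)
    case Nil
    have a: "n (w e (P # Xs)) + 2 = (n (v P Xs) + 2) * 2" using nw1[of e P Xs] by simp
    have b: "n (v P Xs) + 1 = 2 ^ (n P + 1)" using nv0[of P] Nil by simp
    have c: "n (v T Xs) + 1 = 2 ^ (n P + 2)" using nv0[of T] Nil s4.IH by simp
    show ?thesis using a b c by simp
  next
    case (Cons Y Ys)
    have a: "n (w e (P # Xs)) + 2 = (n (v P Xs) + 2) * 2" using nw1[of e P Xs] by simp
    have b: "n (v P Xs) + 1 = (n (w Y Ys) + 1) * 2 ^ (n P + 1)" using nv1[of P Y Ys] Cons by simp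
    have c: "n (v T Xs) + 1 = (n (w Y Ys) + 1) * 2 ^ (n P + 1) * 2" using nv1[of T Y Ys] Cons s4.IH by simp
    show ?thesis using a b c by simp
  qed
next
  case (s5 T T')
  have b: "n (w T []) + 2 = 2 ^ (n T + 2)" using nw0[of T] by simp
  have c: "n (v T' []) + 1 = 2 ^ (n T + 2)" using nv0[of T'] s5.IH by simp
  show ?case using b c by simp
next
  case (s6 Z)
  have b: "n (w Z [e]) + 2 = 3 * 2 ^ (n Z + 1)" using nw1[of Z e "[]"] by simp
  have c: "n (v Z [e]) + 1 = 3 * 2 ^ (n Z + 1)" using nv1[of Z e "[]"] by simp
  show ?case using b c by simp
next
  case (s7 Y Y' Z Ys)
  have b: "n (w Z (e # Y # Ys)) + 2 = (n (v e (Y # Ys)) + 2) * 2 ^ (n Z + 1)" using nw1 by simp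
  have b2: "n (v e (Y # Ys)) + 1 = (n (w Y Ys) + 1) * 2" using nv1[of e Y Ys] by simp
  have c: "n (v Z (Y' # Ys)) + 1 = (n (w Y' Ys) + 1) * 2 ^ (n Z + 1)" using nv1 by simp
  have d: "n (w Y' Ys) + 2 = (n (w Y Ys) + 2) * 2"
  proof (cases Ys)
    case Nil
    then show ?thesis using nw0[of Y] nw0[of Y'] s7.IH by simp
  next
    case (Cons U Us)
    then show ?thesis using nw1[of Y U Us] nw1[of Y' U Us] s7.IH by simp
  qed
  show ?case using b b2 c d by (simp add: algebra_simps)
next
  case (s8 X' X Z Xs)
  have b: "n (w Z (X # Xs)) + 2 = (n (v X Xs) + 2) * 2 ^ (n Z + 1)" using nw1 by simp
  have c: "n (v Z (e # X' # Xs)) + 1 = (n (w e (X' # Xs)) + 1) * 2 ^ (n Z + 1)" using nv1 by simp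
  have c2: "n (w e (X' # Xs)) + 2 = (n (v X' Xs) + 2) * 2" using nw1[of e X' Xs] by simp
  have d: "n (v X Xs) + 1 = (n (v X' Xs) + 1) * 2"
  proof (cases Xs)
    case Nil
    then show ?thesis using nv0[of X] nv0[of X'] s8.IH by simp
  next
    case (Cons U Us)
    then show ?thesis using nv1[of X U Us] nv1[of X' U Us] s8.IH by simp
  qed
  show ?case using b c c2 d by (simp add: algebra_simps)
qed

lemma O_n: "O_rel A R \<Longrightarrow> n R = 2 * n A + 1"
proof (induction rule: O_rel.induct)
  case 1 then show ?case by simp
next
  case (2 X Xs)
  then show ?case using nv1[of e X Xs] by simp
next
  case (3 X X' Xs)
  note h = sigma_n[OF 3]
  show ?case
  proof (cases Xs)
    case Nil
    then show ?thesis using nv0[of X] nv0[of X'] h by simp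
  next
    case (Cons U Us)
    then show ?thesis using nv1[of X U Us] nv1[of X' U Us] h by simp
  qed
qed

lemma I_n: "I_rel A R \<Longrightarrow> n R = 2 * n A + 2"
proof (induction rule: I_rel.induct)
  case 1 then show ?case by simp
next
  case (2 X Xs)
  then show ?case using nw1[of e X Xs] by simp
next
  case (3 X X' Xs)
  note h = sigma_n[OF 3]
  show ?case
  proof (cases Xs)
    case Nil
    then show ?thesis using nw0[of X] nw0[of X'] h by simp
  next
    case (Cons U Us)
    then show ?thesis using nw1[of X U Us] nw1[of X' U Us] h by simp
  qed
qed


lemma no_sigma_e: "\<sigma> P e \<Longrightarrow> False"
  by (cases rule: \<sigma>.cases) auto

lemma sigma_fi: "\<sigma> X Y \<Longrightarrow> (\<forall>Z. \<sigma> X Z \<longrightarrow> Y = Z) \<and> (\<forall>Q. \<sigma> Q Y \<longrightarrow> Q = X)"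
proof (induction rule: \<sigma>.induct)
  case s1 show ?case
    by (intro conjI allI impI; erule \<sigma>.cases) (auto dest: no_sigma_e)
next
  case s2 show ?case
    by (intro conjI allI impI; erule \<sigma>.cases) (auto dest: no_sigma_e)
next
  case (s6 Z') show ?case
    by (intro conjI allI impI; erule \<sigma>.cases) (auto dest: no_sigma_e)
next
  case (s3 X X' Xs)
  have f: "\<And>Z. \<sigma> X Z \<Longrightarrow> X' = Z" and i: "\<And>Q. \<sigma> Q X' \<Longrightarrow> Q = X" using s3.IH by blast+
  show ?case
    by (intro conjI allI impI; erule \<sigma>.cases) (insert s3.hyps, auto dest: no_sigma_e f i)
next
  case (s4 P T Xs)
  have f: "\<And>Z. \<sigma> P Z \<Longrightarrow> T = Z" and i: "\<And>Q. \<sigma> Q T \<Longrightarrow> Q = P" using s4.IH by blast+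
  show ?case
    by (intro conjI allI impI; erule \<sigma>.cases) (insert s4.hyps, auto dest: no_sigma_e f i)
next
  case (s5 T T')
  have f: "\<And>Z. \<sigma> T Z \<Longrightarrow> T' = Z" and i: "\<And>Q. \<sigma> Q T' \<Longrightarrow> Q = T" using s5.IH by blast+
  show ?case
    by (intro conjI allI impI; erule \<sigma>.cases) (insert s5.hyps, auto dest: no_sigma_e f i)
next
  case (s7 Y Y' Z' Ys)
  have f: "\<And>Z. \<sigma> Y Z \<Longrightarrow> Y' = Z" and i: "\<And>Q. \<sigma> Q Y' \<Longrightarrow> Q = Y" using s7.IH by blast+
  show ?case
    by (intro conjI allI impI; erule \<sigma>.cases) (insert s7.hyps, auto dest: no_sigma_e f i)
next
  case (s8 X' X Z' Xs)
  have f: "\<And>Z. \<sigma> X' Z \<Longrightarrow> X = Z" and i: "\<And>Q. \<sigma> Q X \<Longrightarrow> Q = X'" using s8.IH by blast+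
  show ?case
    by (intro conjI allI impI; erule \<sigma>.cases) (insert s8.hyps, auto dest: no_sigma_e f i)
qed

lemma sigma_fun: "\<sigma> X Y \<Longrightarrow> \<sigma> X Z \<Longrightarrow> Y = Z"
  using sigma_fi by blast

lemma O_fun: "O_rel A R \<Longrightarrow> O_rel A R' \<Longrightarrow> R = R'"
  by (auto elim!: O_rel.cases dest: sigma_fun)

lemma I_fun: "I_rel A R \<Longrightarrow> I_rel A R' \<Longrightarrow> R = R'"
  by (auto elim!: I_rel.cases dest: sigma_fun)

lemma sz_l: "Y \<in> set Ys \<Longrightarrow> size Y \<le> size_list size Ys"
  by (induction Ys) auto

lemma sz_v: "Y \<in> set Ys \<Longrightarrow> size Y < size (v Z Ys)"
  using sz_l[of Y Ys] by simp

lemma sz_w: "Y \<in> set Ys \<Longrightarrow> size Y < size (w Z Ys)"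
  using sz_l[of Y Ys] by simp

lemma sigma_total: "(\<exists>X'. \<sigma> X X') \<and> (X \<noteq> e \<longrightarrow> (\<exists>P. \<sigma> P X))"
proof (induction X rule: measure_induct_rule[of size])
  case (less X)
  show ?case
  proof (cases X)
    case e
    then show ?thesis using s1 by blast
  next
    case (v Z Ys)
    have IHZ: "(\<exists>X'. \<sigma> Z X') \<and> (Z \<noteq> e \<longrightarrow> (\<exists>P. \<sigma> P Z))" using less v by simp
    have IHY: "\<And>Y. Y \<in> set Ys \<Longrightarrow> (\<exists>X'. \<sigma> Y X') \<and> (Y \<noteq> e \<longrightarrow> (\<exists>P. \<sigma> P Y))"
      using less v sz_v by blast
    have succ: "\<exists>X'. \<sigma> X X'"
    proof (cases "Z = e")
      case True
      show ?thesis
      proof (cases Ys)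
        case Nil then show ?thesis using True v s2 by blast
      next
        case (Cons Y Xs)
        then obtain Y' where "\<sigma> Y Y'" using IHY by auto
        then show ?thesis using True v Cons s3 by blast
      qed
    next
      case False
      then obtain P where "\<sigma> P Z" using IHZ by auto
      then show ?thesis using v s4 by blast
    qed
    have pred: "\<exists>P. \<sigma> P X"
    proof (cases Ys)
      case Nil
      show ?thesis
      proof (cases "Z = e")
        case True then show ?thesis using v Nil s1 by blast
      next
        case False
        then obtain P where "\<sigma> P Z" using IHZ by auto
        then show ?thesis using v Nil s5 by blast
      qed
    next
      case (Cons Y' Ys')
      show ?thesis
      proof (cases "Y' = e")
        case True
        show ?thesis
        proof (cases Ys')
          case Nil then show ?thesis using v Cons True s6 by blast
        next
          case (Cons X' Xs)
          then obtain X1 where "\<sigma> X' X1" using IHY \<open>Ys = Y' # Ys'\<close> by auto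
          then show ?thesis using v Cons \<open>Ys = Y' # Ys'\<close> True s8 by blast
        qed
      next
        case False
        then obtain Y where "\<sigma> Y Y'" using IHY Cons by auto
        then show ?thesis using v Cons s7 by blast
      qed
    qed
    show ?thesis using succ pred by blast
  next
    case (w Z Ys)
    have IHZ: "(\<exists>X'. \<sigma> Z X') \<and> (Z \<noteq> e \<longrightarrow> (\<exists>P. \<sigma> P Z))" using less w by simp
    have IHY: "\<And>Y. Y \<in> set Ys \<Longrightarrow> (\<exists>X'. \<sigma> Y X') \<and> (Y \<noteq> e \<longrightarrow> (\<exists>P. \<sigma> P Y))"
      using less w sz_w by blast
    have succ: "\<exists>X'. \<sigma> X X'"
    proof (cases Ys)
      case Nil
      then obtain Z' where "\<sigma> Z Z'" using IHZ by auto
      then show ?thesis using w Nil s5 by blast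
    next
      case (Cons X1 Xs)
      show ?thesis
      proof (cases "X1 = e")
        case True
        show ?thesis
        proof (cases Xs)
          case Nil then show ?thesis using w Cons True s6 by blast
        next
          case (Cons Y Ys')
          then obtain Y' where "\<sigma> Y Y'" using IHY \<open>Ys = X1 # Xs\<close> by auto
          then show ?thesis using w Cons \<open>Ys = X1 # Xs\<close> True s7 by blast
        qed
      next
        case False
        then obtain X' where "\<sigma> X' X1" using IHY Cons by auto
        then show ?thesis using w Cons s8 by blast
      qed
    qed
    have pred: "\<exists>P. \<sigma> P X"
    proof (cases "Z = e")
      case False
      then obtain Z0 where "\<sigma> Z0 Z" using IHZ by auto
      then show ?thesis using w s3 by blast
    next
      case True
      show ?thesis
      proof (cases Ys)
        case Nil then show ?thesis using w True s2 by blast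
      next
        case (Cons P Xs)
        then obtain T1 where "\<sigma> P T1" using IHY by auto
        then show ?thesis using w True Cons s4 by blast
      qed
    qed
    show ?thesis using succ pred by blast
  qed
qed

lemma O_ex: "\<exists>R. O_rel A R"
proof (cases A)
  case e then show ?thesis using O_rel.intros(1) by blast
next
  case (v X Xs)
  then obtain X' where "\<sigma> X X'" using sigma_total by blast
  then show ?thesis using v O_rel.intros(3) by blast
next
  case (w X Xs) then show ?thesis using O_rel.intros(2) by blast
qed

lemma I_ex: "\<exists>R. I_rel A R"
proof (cases A)
  case e then show ?thesis using I_rel.intros(1) by blast
next
  case (w X Xs)
  then obtain X' where "\<sigma> X X'" using sigma_total by blast
  then show ?thesis using w I_rel.intros(3) by blast
next
  case (v X Xs) then show ?thesis using I_rel.intros(2) by blast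
qed

lemma t_ex: "\<exists>X. t x X"
proof (induction x rule: less_induct)
  case (less x)
  show ?case
  proof (cases "x = 0")
    case True then show ?thesis using t0 by blast
  next
    case False
    show ?thesis
    proof (cases "odd x")
      case True
      obtain A where "t ((x - 1) div 2) A" using less False by (metis diff_less div_le_dividend le_less_trans less_numeral_extra(1) zero_less_iff_neq_zero)
      moreover obtain R where "O_rel A R" using O_ex by blast
      ultimately show ?thesis using t_odd False True by blast
    next
      case ev: False
      have "x div 2 - 1 < x" using False by simp
      then obtain A where "t (x div 2 - 1) A" using less by blast
      moreover obtain R where "I_rel A R" using I_ex by blast
      ultimately show ?thesis using t_even False ev by blast
    qed
  qed
qed

lemma t_uniq: "t x X \<Longrightarrow> t x Y \<Longrightarrow> X = Y"
proof (induction arbitrary: Y rule: t.induct)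
  case t0 then show ?case by (cases rule: t.cases) auto
next
  case (t_odd x A R)
  from t_odd.prems show ?case
  proof (cases rule: t.cases)
    case (t_odd A')
    then show ?thesis using t_odd.IH \<open>O_rel A R\<close> O_fun by metis
  qed (use t_odd.hyps in auto)
next
  case (t_even x A R)
  from t_even.prems show ?case
  proof (cases rule: t.cases)
    case (t_even A')
    then show ?thesis using t_even.IH \<open>I_rel A R\<close> I_fun by metis
  qed (use t_even.hyps in auto)
qed

lemma t_n: "t x X \<Longrightarrow> n X = x"
proof (induction rule: t.induct)
  case t0 then show ?case by simp
next
  case (t_odd x A R) then show ?case using O_n by fastforce
next
  case (t_even x A R) then show ?case using I_n by fastforce
qed

lemma n_t: "t (n X) X"
proof (induction X rule: measure_induct_rule[of n])
  case (less X)
  show ?case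
  proof (cases X)
    case e then show ?thesis using t0 by simp
  next
    case (v Z Ys)
    have "\<exists>A. O_rel A X"
    proof (cases "Z = e")
      case True
      show ?thesis
      proof (cases Ys)
        case Nil then show ?thesis using v True O_rel.intros(1) by blast
      next
        case (Cons Y Ys') then show ?thesis using v True O_rel.intros(2) by blast
      qed
    next
      case False
      then obtain P where "\<sigma> P Z" using sigma_total by blast
      then show ?thesis using v O_rel.intros(3) by blast
    qed
    then obtain A where A: "O_rel A X" by blast
    have nA: "n X = 2 * n A + 1" using O_n[OF A] .
    then have "t (n A) A" using less by simp
    then show ?thesis using t_odd[of "n X" A X] nA A by simp
  next
    case (w Z Ys)
    have "\<exists>A. I_rel A X"
    proof (cases "Z = e")
      case True
      show ?thesis
      proof (cases Ys)
        case Nil then show ?thesis using w True I_rel.intros(1) by blast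
      next
        case (Cons Y Ys') then show ?thesis using w True I_rel.intros(2) by blast
      qed
    next
      case False
      then obtain P where "\<sigma> P Z" using sigma_total by blast
      then show ?thesis using w I_rel.intros(3) by blast
    qed
    then obtain A where A: "I_rel A X" by blast
    have nA: "n X = 2 * n A + 2" using I_n[OF A] .
    then have "t (n A) A" using less by simp
    then show ?thesis using t_even[of "n X" A X] nA A by simp
  qed
qed

theorem proposition4:
  shows "(\<forall>x. \<exists>!X. t x X) \<and>
         (\<forall>X. t (n X) X) \<and>
         (\<forall>x. n (THE X. t x X) = x)"
proof (intro conjI allI)
  fix x show "\<exists>!X. t x X" using t_ex t_uniq by blast
next
  fix X show "t (n X) X" by (rule n_t)
next
  fix x
  have "\<exists>!X. t x X" using t_ex t_uniq by blast
  then have "t x (THE X. t x X)" by (rule theI')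
  then show "n (THE X. t x X) = x" by (rule t_n)
qed

end
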